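(* Let $\Sigma_A=\{\tau_{1,1},\dots,\tau_{1,a},\alpha_1,\dots,\alpha_p\}$ and $\Sigma_B=\{\tau_{2,1},\dots,\tau_{2,b},\beta_1,\dots,\beta_q\}$ be finite alphabets, and let $\mathcal{L}_A\subseteq\Sigma_A^*$ and $\mathcal{L}_B\subseteq\Sigma_B^*$ be regular languages. Then their Segre product $\mathcal{L}_A\boxtimes\mathcal{L}_B$ is a regular language.
   Context: The alphabets are disjoint and each is partitioned into the "$\tau$-letters" ($\tau_{1,1},\dots,\tau_{1,a}$, resp. $\tau_{2,1},\dots,\tau_{2,b}$) and the remaining letters ($\alpha_1,\dots,\alpha_p$, resp. $\beta_1,\dots,\beta_q$). Every word in $\Sigma_A^*$ can be uniquely written as $u_1\alpha_{i_1}u_2\alpha_{i_2}\cdots u_d\alpha_{i_d}u_{d+1}$ with $d\ge 0$, $i_1,\dots,i_d\in[p]$, and each $u_k$ a (possibly empty) word in the letters $\tau_{1,1},\dots,\tau_{1,a}$; similarly every word in $\Sigma_B^*$ is uniquely $v_1\beta_{j_1}\cdots v_d\beta_{j_d}v_{d+1}$ with the $v_k$ words in $\tau_{2,1},\dots,\tau_{2,b}$. The Segre product $\mathcal{L}_A\boxtimes\mathcal{L}_B$ is the language on the alphabet $\{\tau_{1,1},\dots,\tau_{1,a},\tau_{2,1},\dots,\tau_{2,b}\}\cup\{\gamma_{i,j}: i\in[p], j\in[q]\}$ (with $pq+a+b$ letters) consisting of all words $u_1v_1\gamma_{i_1,j_1}u_2v_2\gamma_{i_2,j_2}\cdots u_dv_d\gamma_{i_d,j_d}u_{d+1}v_{d+1}$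 such that $u_1\alpha_{i_1}u_2\alpha_{i_2}\cdots u_d\alpha_{i_d}u_{d+1}\in\mathcal{L}_A$ and $v_1\beta_{j_1}v_2\beta_{j_2}\cdots v_d\beta_{j_d}v_{d+1}\in\mathcal{L}_B$ (with the same $d$). Regular languages are those in the smallest class containing the languages consisting of a single letter or of the empty word, closed under union, concatenation and Kleene star (equivalently, those recognized by a finite automaton). *)

theory Defs
  imports Main
begin

definition lang_concat :: "'a list set \<Rightarrow> 'a list set \<Rightarrow> 'a list set" where
  "lang_concat A B = {xs @ ys | xs ys. xs \<in> A \<and> ys \<in> B}"

definition lang_star :: "'a list set \<Rightarrow> 'a list set" where
  "lang_star A = {concat ws | ws. set ws \<subseteq> A}"

inductive regular :: "'a list set \<Rightarrow> bool" where
  reg_empty: "regular {}"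
| reg_eps: "regular {[]}"
| reg_letter: "regular {[c]}"
| reg_union: "regular A \<Longrightarrow> regular B \<Longrightarrow> regular (A \<union> B)"
| reg_concat: "regular A \<Longrightarrow> regular B \<Longrightarrow> regular (lang_concat A B)"
| reg_star: "regular A \<Longrightarrow> regular (lang_star A)"

text \<open>Letters of the Segre product alphabet: tau-letters of A, tau-letters of B,
  and gamma letters gamma_{i,j} indexed by pairs (alpha_i, beta_j).\<close>

datatype ('x, 'y) segre_letter = TauA 'x | TauB 'y | Gamma 'x 'y

text \<open>The word u_1 alpha_{i_1} ... u_d alpha_{i_d} u_{d+1}, given the list of pairs
  (u_k, alpha_{i_k}) for k = 1..d and the final block u_{d+1}.\<close>

definition weave :: "('x list \<times> 'x) list \<Rightarrow> 'x list \<Rightarrow> 'x list" where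
  "weave ps u = concat (map (\<lambda>(uk, x). uk @ [x]) ps) @ u"

definition segre_word ::
  "('x list \<times> 'x) list \<Rightarrow> 'x list \<Rightarrow> ('y list \<times> 'y) list \<Rightarrow> 'y list \<Rightarrow> ('x, 'y) segre_letter list" where
  "segre_word ps u qs v =
     concat (map (\<lambda>((uk, x), (vk, y)). map TauA uk @ map TauB vk @ [Gamma x y]) (zip ps qs))
     @ map TauA u @ map TauB v"

text \<open>Segre product of L_A (alphabet TA \<union> AA, tau-letters TA) and L_B (alphabet TB \<union> BB,
  tau-letters TB).\<close>

definition segre_product ::
  "'x set \<Rightarrow> 'x set \<Rightarrow> 'x list set \<Rightarrow> 'y set \<Rightarrow> 'y set \<Rightarrow> 'y list set \<Rightarrow> ('x, 'y) segre_letter list set" where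
  "segre_product TA AA LA TB BB LB =
     {segre_word ps u qs v | ps u qs v.
        length ps = length qs
      \<and> (\<forall>(uk, x) \<in> set ps. set uk \<subseteq> TA \<and> x \<in> AA) \<and> set u \<subseteq> TA
      \<and> (\<forall>(vk, y) \<in> set qs. set vk \<subseteq> TB \<and> y \<in> BB) \<and> set v \<subseteq> TB
      \<and> weave ps u \<in> LA \<and> weave qs v \<in> LB}"

end

theory Submission
  imports Defs
begin


definition dq :: "'a list \<Rightarrow> 'a list set \<Rightarrow> 'a list set" where
  "dq w L = {v. w @ v \<in> L}"

lemma dq_Nil[simp]: "dq [] L = L" by (simp add: dq_def)
lemma dq_append: "dq (u @ v) L = dq v (dq u L)" by (simp add: dq_def)
lemma dq_Cons: "dq (a # w) L = dq w (dq [a] L)" by (simp add: dq_def)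

lemma regular_UN:
  assumes "finite I" "\<And>i. i \<in> I \<Longrightarrow> regular (f i)"
  shows "regular (\<Union>i\<in>I. f i)"
  using assms by (induction I rule: finite_induct) (auto intro: regular.intros)

lemma star_Nil: "[] \<in> lang_star A"
  unfolding lang_star_def by (rule CollectI, rule exI[of _ "[]"]) simp

lemma star_app: "u \<in> lang_star A \<Longrightarrow> v \<in> lang_star A \<Longrightarrow> u @ v \<in> lang_star A"
  unfolding lang_star_def by (auto, metis concat_append le_sup_iff set_append)

lemma star_base: "u \<in> A \<Longrightarrow> u \<in> lang_star A"
  unfolding lang_star_def by (auto intro!: exI[of _ "[u]"])

lemma star_split:
  "w @ x = concat ws \<Longrightarrow> set ws \<subseteq> A \<Longrightarrow> w \<noteq> [] \<Longrightarrow>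
   \<exists>u v y z. w = u@v \<and> u \<in> lang_star A \<and> v \<noteq> [] \<and> v@y \<in> A \<and> x = y@z \<and> z \<in> lang_star A"
proof (induction ws arbitrary: w)
  case Nil then show ?case by simp
next
  case (Cons a ws)
  have cs: "concat ws \<in> lang_star A" using Cons.prems(2) unfolding lang_star_def by auto
  from Cons.prems(1) have "w @ x = a @ concat ws" by simp
  then obtain us where "(w = a @ us \<and> us @ x = concat ws) \<or> (w @ us = a \<and> x = us @ concat ws)"
    by (auto simp: append_eq_append_conv2)
  then show ?case
  proof (elim disjE conjE)
    assume h: "w = a @ us" "us @ x = concat ws"
    show ?thesis
    proof (cases "us = []")
      case True
      then show ?thesis using h Cons.prems cs
        by (intro exI[of _ "[]"] exI[of _ a] exI[of _ "[]"] exI[of _ "concat ws"]) (auto simp: star_Nil)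
    next
      case False
      from Cons.IH[OF h(2) _ False] Cons.prems(2) obtain u v y z where
        "us = u@v" "u \<in> lang_star A" "v \<noteq> []" "v@y \<in> A" "x = y@z" "z \<in> lang_star A" by auto
      then show ?thesis using h Cons.prems
        by (intro exI[of _ "a@u"] exI[of _ v] exI[of _ y] exI[of _ z]) (auto intro: star_app star_base)
    qed
  next
    assume h: "w @ us = a" "x = us @ concat ws"
    then show ?thesis using Cons.prems cs
      by (intro exI[of _ "[]"] exI[of _ w] exI[of _ us] exI[of _ "concat ws"]) (auto simp: star_Nil)
  qed
qed

section \<open>Regular implies finitely many quotients\<close>

lemma dq_concat_eq:
  "dq w (lang_concat A B) = lang_concat (dq w A) B \<union> \<Union> {dq v B | v. \<exists>u. w = u @ v \<and> u \<in> A}"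
  unfolding dq_def lang_concat_def
  apply (auto simp: append_eq_append_conv2)
  apply blast+
  done

lemma dq_star_eq:
  "dq w (lang_star A) = (if w = [] then lang_star A else {}) \<union>
     \<Union> {lang_concat (dq v A) (lang_star A) | u v. w = u @ v \<and> u \<in> lang_star A \<and> v \<noteq> []}"
  (is "?L = ?R")
proof
  show "?L \<subseteq> ?R"
  proof
    fix x assume "x \<in> ?L"
    then obtain ws where ws: "w @ x = concat ws" "set ws \<subseteq> A"
      unfolding dq_def lang_star_def by auto
    show "x \<in> ?R"
    proof (cases "w = []")
      case True then show ?thesis using \<open>x \<in> ?L\<close> by simp
    next
      case False
      from star_split[OF ws False] obtain u v y z where
        "w = u@v" "u \<in> lang_star A" "v \<noteq> []" "v@y \<in> A" "x = y@z" "z \<in> lang_star A" by blast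
      then show ?thesis unfolding lang_concat_def dq_def by blast
    qed
  qed
next
  show "?R \<subseteq> ?L"
  proof
    fix x assume "x \<in> ?R"
    then consider "w = []" "x \<in> lang_star A"
      | u v y z where "w = u@v" "u \<in> lang_star A" "v@y \<in> A" "x = y@z" "z \<in> lang_star A"
      unfolding lang_concat_def dq_def by (auto split: if_splits)
    then show "x \<in> ?L"
    proof cases
      case 1 then show ?thesis by simp
    next
      case 2
      have "u @ ((v@y) @ z) \<in> lang_star A"
        using 2 by (blast intro: star_app star_base)
      then show ?thesis using 2 by (simp add: dq_def)
    qed
  qed
qed

lemma regular_fin_dq: "regular L \<Longrightarrow> finite (range (\<lambda>w. dq w L))"
proof (induction rule: regular.induct)
  case reg_empty
  then show ?case by (simp add: dq_def)
next
  case reg_eps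
  have "range (\<lambda>w. dq w {[]}) \<subseteq> {{[]}, {}}" by (auto simp: dq_def)
  then show ?case by (rule finite_subset) simp
next
  case (reg_letter c)
  have "range (\<lambda>w. dq w {[c]}) \<subseteq> {{[c]}, {[]}, {}}"
    by (auto simp: dq_def append_eq_Cons_conv)
  then show ?case by (rule finite_subset) simp
next
  case (reg_union A B)
  have "range (\<lambda>w. dq w (A \<union> B)) \<subseteq> (\<lambda>(X,Y). X \<union> Y) ` (range (\<lambda>w. dq w A) \<times> range (\<lambda>w. dq w B))"
  proof
    fix Z assume "Z \<in> range (\<lambda>w. dq w (A \<union> B))"
    then obtain w where "Z = dq w (A \<union> B)" by auto
    then show "Z \<in> (\<lambda>(X,Y). X \<union> Y) ` (range (\<lambda>w. dq w A) \<times> range (\<lambda>w. dq w B))"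
      by (intro image_eqI[of _ _ "(dq w A, dq w B)"]) (auto simp: dq_def)
  qed
  then show ?case by (rule finite_subset) (use reg_union in auto)
next
  case (reg_concat A B)
  have "range (\<lambda>w. dq w (lang_concat A B)) \<subseteq>
     (\<lambda>(X,S). lang_concat X B \<union> \<Union> S) ` (range (\<lambda>w. dq w A) \<times> Pow (range (\<lambda>w. dq w B)))"
  proof
    fix Z assume "Z \<in> range (\<lambda>w. dq w (lang_concat A B))"
    then obtain w where "Z = dq w (lang_concat A B)" by auto
    then show "Z \<in> (\<lambda>(X,S). lang_concat X B \<union> \<Union> S) ` (range (\<lambda>w. dq w A) \<times> Pow (range (\<lambda>w. dq w B)))"
      unfolding dq_concat_eq
      by (intro image_eqI[of _ _ "(dq w A, {dq v B | v. \<exists>u. w = u @ v \<and> u \<in> A})"]) auto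
  qed
  then show ?case by (rule finite_subset) (use reg_concat in auto)
next
  case (reg_star A)
  have "range (\<lambda>w. dq w (lang_star A)) \<subseteq>
     (\<lambda>(b,S). (if b then lang_star A else {}) \<union> \<Union> ((\<lambda>X. lang_concat X (lang_star A)) ` S)) ` (UNIV \<times> Pow (range (\<lambda>w. dq w A)))"
  proof
    fix Z assume "Z \<in> range (\<lambda>w. dq w (lang_star A))"
    then obtain w where "Z = dq w (lang_star A)" by auto
    then show "Z \<in> (\<lambda>(b,S). (if b then lang_star A else {}) \<union> \<Union> ((\<lambda>X. lang_concat X (lang_star A)) ` S)) ` (UNIV \<times> Pow (range (\<lambda>w. dq w A)))"
      unfolding dq_star_eq
      by (intro image_eqI[of _ _ "(w = [], {dq v A | u v. w = u @ v \<and> u \<in> lang_star A \<and> v \<noteq> []})"]) auto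
  qed
  then show ?case by (rule finite_subset) (use reg_star in auto)
qed



fun mids :: "'a list set \<Rightarrow> 'a list \<Rightarrow> 'a list set set" where
  "mids p [] = {}"
| "mids p (a # w) = (if w = [] then {} else insert (dq [a] p) (mids (dq [a] p) w))"

definition Pth :: "'a set \<Rightarrow> 'a list set \<Rightarrow> 'a list set \<Rightarrow> 'a list set set \<Rightarrow> 'a list set" where
  "Pth Sig p q S = {w. w \<in> lists Sig \<and> dq w p = q \<and> mids p w \<subseteq> S}"

lemma mids_append:
  "u \<noteq> [] \<Longrightarrow> v \<noteq> [] \<Longrightarrow> mids p (u @ v) = mids p u \<union> {dq u p} \<union> mids (dq u p) v"
proof (induction u arbitrary: p)
  case Nil then show ?case by simp
next
  case (Cons a u)
  show ?case
  proof (cases "u = []")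
    case True then show ?thesis using Cons.prems by (cases v) auto
  next
    case False
    then show ?thesis using Cons.IH[OF False Cons.prems(2), of "dq [a] p"] Cons.prems
      by (auto simp: dq_Cons[of a u])
  qed
qed

lemma Pth_app:
  assumes "w1 \<in> Pth Sig p s T" "w2 \<in> Pth Sig s q T" "s \<in> T"
  shows "w1 @ w2 \<in> Pth Sig p q T"
proof (cases "w1 = [] \<or> w2 = []")
  case True then show ?thesis using assms by (auto simp: Pth_def)
next
  case False then show ?thesis using assms by (auto simp: Pth_def mids_append dq_append)
qed

lemma Pth_Nil: "[] \<in> Pth Sig s s T" by (simp add: Pth_def)

lemma Pth_concat: "set ws \<subseteq> Pth Sig s s T \<Longrightarrow> s \<in> T \<Longrightarrow> concat ws \<in> Pth Sig s s T"
  by (induction ws) (auto simp: Pth_Nil intro: Pth_app)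

lemma Pth_mono: "S \<subseteq> T \<Longrightarrow> Pth Sig p q S \<subseteq> Pth Sig p q T"
  by (auto simp: Pth_def)

lemma Pth_decomp:
  "w \<in> Pth Sig p q (insert s S) \<Longrightarrow>
   w \<in> Pth Sig p q S \<union> lang_concat (Pth Sig p s S) (lang_concat (lang_star (Pth Sig s s S)) (Pth Sig s q S))"
proof (induction w arbitrary: p)
  case Nil then show ?case by (simp add: Pth_def)
next
  case (Cons a w)
  let ?X = "lang_concat (lang_star (Pth Sig s s S)) (Pth Sig s q S)"
  have X1: "Pth Sig s q S \<subseteq> ?X"
  proof
    fix x assume "x \<in> Pth Sig s q S"
    then have "[] @ x \<in> ?X" using star_Nil unfolding lang_concat_def by blast
    then show "x \<in> ?X" by simp
  qed
  have X2: "lang_concat (Pth Sig s s S) ?X \<subseteq> ?X"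
  proof
    fix x assume "x \<in> lang_concat (Pth Sig s s S) ?X"
    then obtain a b c where "x = a @ b @ c" "a \<in> Pth Sig s s S" "b \<in> lang_star (Pth Sig s s S)"
      "c \<in> Pth Sig s q S" unfolding lang_concat_def by auto
    then have "(a @ b) @ c \<in> ?X" unfolding lang_concat_def by (blast intro: star_app star_base)
    then show "x \<in> ?X" using \<open>x = _\<close> by simp
  qed
  let ?p = "dq [a] p"
  show ?case
  proof (cases "w = []")
    case True then show ?thesis using Cons.prems by (auto simp: Pth_def)
  next
    case False
    have a: "a \<in> Sig" and w: "w \<in> Pth Sig ?p q (insert s S)" and m: "?p \<in> insert s S"
      using Cons.prems False by (auto simp: Pth_def dq_Cons[of a w])
    have aP: "[a] \<in> Pth Sig p ?p S" using a by (simp add: Pth_def)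
    show ?thesis
    proof (cases "?p = s")
      case True
      have ih: "w \<in> Pth Sig s q S \<union> lang_concat (Pth Sig s s S) ?X" using Cons.IH[OF w] True by simp
      have "w \<in> ?X" using ih X1 X2 by blast
      then have "[a] @ w \<in> lang_concat (Pth Sig p s S) ?X" using aP True unfolding lang_concat_def by blast
      then show ?thesis by simp
    next
      case ne: False
      with m have pS: "?p \<in> S" by simp
      from Cons.IH[OF w] show ?thesis
      proof
        assume "w \<in> Pth Sig ?p q S"
        then have "[a] @ w \<in> Pth Sig p q S" using Pth_app[OF aP _ pS] by blast
        then show ?thesis by simp
      next
        assume "w \<in> lang_concat (Pth Sig ?p s S) ?X"
        then obtain w1 w2 where "w = w1 @ w2" "w1 \<in> Pth Sig ?p s S" "w2 \<in> ?X"
          unfolding lang_concat_def by auto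
        moreover have "[a] @ w1 \<in> Pth Sig p s S" by (rule Pth_app[OF aP \<open>w1 \<in> _\<close> pS])
        ultimately have "([a] @ w1) @ w2 \<in> lang_concat (Pth Sig p s S) ?X" unfolding lang_concat_def by blast
        then show ?thesis using \<open>w = w1 @ w2\<close> by simp
      qed
    qed
  qed
qed

lemma Pth_insert:
  "Pth Sig p q (insert s S) =
   Pth Sig p q S \<union> lang_concat (Pth Sig p s S) (lang_concat (lang_star (Pth Sig s s S)) (Pth Sig s q S))"
proof
  show "Pth Sig p q (insert s S) \<subseteq> Pth Sig p q S \<union> lang_concat (Pth Sig p s S) (lang_concat (lang_star (Pth Sig s s S)) (Pth Sig s q S))" using Pth_decomp by blast
next
  let ?T = "insert s S"
  have "lang_concat (Pth Sig p s S) (lang_concat (lang_star (Pth Sig s s S)) (Pth Sig s q S)) \<subseteq> Pth Sig p q ?T"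
  proof
    fix x assume "x \<in> lang_concat (Pth Sig p s S) (lang_concat (lang_star (Pth Sig s s S)) (Pth Sig s q S))"
    then obtain a ws c where "x = a @ concat ws @ c" "a \<in> Pth Sig p s S" "set ws \<subseteq> Pth Sig s s S"
      "c \<in> Pth Sig s q S" unfolding lang_concat_def lang_star_def by auto
    note h = this
    have m: "Pth Sig p' q' S \<subseteq> Pth Sig p' q' ?T" for p' q' by (rule Pth_mono) (rule subset_insertI)
    have 1: "a \<in> Pth Sig p s ?T" using h(2) m by blast
    have "set ws \<subseteq> Pth Sig s s ?T" using h(3) m by blast
    then have 2: "concat ws \<in> Pth Sig s s ?T" by (rule Pth_concat) simp
    have 3: "c \<in> Pth Sig s q ?T" using h(4) m by blast
    have "concat ws @ c \<in> Pth Sig s q ?T" by (rule Pth_app[OF 2 3 insertI1])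
    then have "a @ concat ws @ c \<in> Pth Sig p q ?T" by (rule Pth_app[OF 1 _ insertI1])
    then show "x \<in> Pth Sig p q ?T" using \<open>x = _\<close> by simp
  qed
  then show "Pth Sig p q S \<union> lang_concat (Pth Sig p s S) (lang_concat (lang_star (Pth Sig s s S)) (Pth Sig s q S)) \<subseteq> Pth Sig p q ?T" using Pth_mono[of S ?T] by blast
qed

lemma mids_empty: "mids p w = {} \<longleftrightarrow> length w \<le> 1"
  by (cases w) auto

lemma Pth_empty:
  "Pth Sig p q {} = (if p = q then {[]} else {}) \<union> (\<Union>a\<in>{a\<in>Sig. dq [a] p = q}. {[a]})"
proof -
  have "w \<in> Pth Sig p q {} \<longleftrightarrow> w \<in> (if p = q then {[]} else {}) \<union> (\<Union>a\<in>{a\<in>Sig. dq [a] p = q}. {[a]})" for w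
    by (cases w) (auto simp: Pth_def)
  then show ?thesis by blast
qed

lemma regular_Pth: assumes "finite Sig" shows "finite S \<Longrightarrow> regular (Pth Sig p q S)"
proof (induction S arbitrary: p q rule: finite_induct)
  case empty
  show ?case unfolding Pth_empty
    by (intro reg_union regular_UN) (use assms in \<open>auto intro: regular.intros\<close>)
next
  case (insert s S)
  show ?case unfolding Pth_insert by (intro reg_union reg_concat reg_star insert.IH)
qed

lemma mids_sub: "mids p w \<subseteq> range (\<lambda>u. dq u p)"
proof (induction w arbitrary: p)
  case Nil then show ?case by simp
next
  case (Cons a w)
  have "mids (dq [a] p) w \<subseteq> range (\<lambda>u. dq u p)"
    using Cons.IH[of "dq [a] p"] by (auto simp: dq_append[symmetric])
  then show ?case by auto
qed

lemma fin_dq_regular: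
  assumes "finite Sig" "L \<subseteq> lists Sig" "finite (range (\<lambda>w. dq w L))"
  shows "regular L"
proof -
  let ?Q = "range (\<lambda>w. dq w L)"
  have "L = (\<Union>q\<in>{q\<in>?Q. [] \<in> q}. Pth Sig L q ?Q)" (is "L = ?U")
  proof
    show "L \<subseteq> ?U"
    proof
      fix w assume "w \<in> L"
      then have "w \<in> Pth Sig L (dq w L) ?Q" using assms(2) mids_sub[of L w] by (auto simp: Pth_def)
      moreover have "[] \<in> dq w L" using \<open>w \<in> L\<close> by (simp add: dq_def)
      ultimately show "w \<in> ?U" by blast
    qed
  next
    show "?U \<subseteq> L"
    proof
      fix w assume "w \<in> ?U"
      then obtain q where "[] \<in> q" "dq w L = q" by (auto simp: Pth_def)
      then show "w \<in> L" by (auto simp: dq_def)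
    qed
  qed
  moreover have "regular (\<Union>q\<in>{q\<in>?Q. [] \<in> q}. Pth Sig L q ?Q)"
    using assms by (intro regular_UN regular_Pth[OF assms(1)]) auto
  ultimately show ?thesis by simp
qed



fun pA :: "('x, 'y) segre_letter list \<Rightarrow> 'x list" where
  "pA [] = []"
| "pA (TauA x # w) = x # pA w"
| "pA (TauB y # w) = pA w"
| "pA (Gamma x y # w) = x # pA w"

fun pB :: "('x, 'y) segre_letter list \<Rightarrow> 'y list" where
  "pB [] = []"
| "pB (TauA x # w) = pB w"
| "pB (TauB y # w) = y # pB w"
| "pB (Gamma x y # w) = y # pB w"

fun okp :: "bool \<Rightarrow> ('x, 'y) segre_letter list \<Rightarrow> bool" where
  "okp b [] = True"
| "okp b (TauA x # w) = (\<not> b \<and> okp False w)"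
| "okp b (TauB y # w) = okp True w"
| "okp b (Gamma x y # w) = okp False w"

fun phs :: "bool \<Rightarrow> ('x, 'y) segre_letter list \<Rightarrow> bool" where
  "phs b [] = b"
| "phs b (TauA x # w) = phs False w"
| "phs b (TauB y # w) = phs True w"
| "phs b (Gamma x y # w) = phs False w"

definition vl :: "'x set \<Rightarrow> 'x set \<Rightarrow> 'y set \<Rightarrow> 'y set \<Rightarrow> ('x, 'y) segre_letter set" where
  "vl TA AA TB BB = {c. case c of TauA x \<Rightarrow> x \<in> TA | TauB y \<Rightarrow> y \<in> TB | Gamma x y \<Rightarrow> x \<in> AA \<and> y \<in> BB}"

lemma vl_simps[simp]:
  "TauA x \<in> vl TA AA TB BB \<longleftrightarrow> x \<in> TA"
  "TauB y \<in> vl TA AA TB BB \<longleftrightarrow> y \<in> TB"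
  "Gamma x y \<in> vl TA AA TB BB \<longleftrightarrow> x \<in> AA \<and> y \<in> BB"
  by (auto simp: vl_def)

lemma finite_vl:
  assumes "finite TA" "finite AA" "finite TB" "finite BB"
  shows "finite (vl TA AA TB BB)"
proof -
  have "vl TA AA TB BB \<subseteq> TauA ` TA \<union> TauB ` TB \<union> (\<lambda>(x,y). Gamma x y) ` (AA \<times> BB)"
  proof
    fix c assume "c \<in> vl TA AA TB BB"
    then show "c \<in> TauA ` TA \<union> TauB ` TB \<union> (\<lambda>(x,y). Gamma x y) ` (AA \<times> BB)"
      by (cases c) auto
  qed
  then show ?thesis by (rule finite_subset) (use assms in auto)
qed

lemma pA_append[simp]: "pA (u @ v) = pA u @ pA v"
proof (induction u)
  case (Cons a u) then show ?case by (cases a) auto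
qed simp

lemma pB_append[simp]: "pB (u @ v) = pB u @ pB v"
proof (induction u)
  case (Cons a u) then show ?case by (cases a) auto
qed simp

lemma okp_append: "okp b (u @ v) = (okp b u \<and> okp (phs b u) v)"
proof (induction u arbitrary: b)
  case (Cons a u) then show ?case by (cases a) auto
qed simp

lemma pA_mapA[simp]: "pA (map TauA u) = u" by (induction u) auto
lemma pA_mapB[simp]: "pA (map TauB u) = []" by (induction u) auto
lemma pB_mapA[simp]: "pB (map TauA u) = []" by (induction u) auto
lemma pB_mapB[simp]: "pB (map TauB u) = u" by (induction u) auto
lemma okp_mapA[simp]: "okp False (map TauA u)" by (induction u) auto
lemma phs_mapA[simp]: "phs False (map TauA u) = False" by (induction u) auto
lemma okp_mapB[simp]: "okp b (map TauB u)" by (induction u arbitrary: b) auto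

lemma sw_Nil[simp]: "segre_word [] u [] v = map TauA u @ map TauB v"
  by (simp add: segre_word_def)
lemma sw_Cons[simp]: "segre_word ((uk,x) # ps) u ((vk,y) # qs) v =
   map TauA uk @ map TauB vk @ Gamma x y # segre_word ps u qs v"
  by (simp add: segre_word_def)
lemma weave_Nil[simp]: "weave [] u = u" by (simp add: weave_def)
lemma weave_Cons[simp]: "weave ((uk,x) # ps) u = uk @ x # weave ps u" by (simp add: weave_def)

lemma sw_props:
  assumes "length ps = length qs"
  shows "pA (segre_word ps u qs v) = weave ps u \<and> pB (segre_word ps u qs v) = weave qs v
    \<and> okp False (segre_word ps u qs v)"
  using assms
proof (induction ps arbitrary: qs)
  case Nil then show ?case by (simp add: okp_append)
next
  case (Cons pa ps)
  then obtain qa qs' where qs: "qs = qa # qs'" by (cases qs) auto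
  obtain uk x where pa: "pa = (uk, x)" by (cases pa)
  obtain vk y where qa: "qa = (vk, y)" by (cases qa)
  show ?case using Cons.IH[of qs'] Cons.prems
    by (simp add: qs pa qa okp_append)
qed

lemma sw_lists:
  assumes "length ps = length qs" "\<forall>(uk, x) \<in> set ps. set uk \<subseteq> TA \<and> x \<in> AA" "set u \<subseteq> TA"
      "\<forall>(vk, y) \<in> set qs. set vk \<subseteq> TB \<and> y \<in> BB" "set v \<subseteq> TB"
  shows "segre_word ps u qs v \<in> lists (vl TA AA TB BB)"
  using assms
proof (induction ps arbitrary: qs)
  case Nil
  have "\<forall>x\<in>set u. x \<in> TA" "\<forall>x\<in>set v. x \<in> TB" using Nil.prems(3,5) by blast+
  then have "map TauA u \<in> lists (vl TA AA TB BB)" "map TauB v \<in> lists (vl TA AA TB BB)" by auto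
  then show ?case using Nil by auto
next
  case (Cons pa ps)
  then obtain qa qs' where qs: "qs = qa # qs'" by (cases qs) auto
  obtain uk x where pa: "pa = (uk, x)" by (cases pa)
  obtain vk y where qa: "qa = (vk, y)" by (cases qa)
  have "set uk \<subseteq> TA" "set vk \<subseteq> TB" "x \<in> AA" "y \<in> BB" using Cons.prems by (auto simp: qs pa qa)
  then have "\<forall>x\<in>set uk. x \<in> TA" "\<forall>x\<in>set vk. x \<in> TB" by blast+
  then have "map TauA uk \<in> lists (vl TA AA TB BB)" "map TauB vk \<in> lists (vl TA AA TB BB)"
    "Gamma x y \<in> vl TA AA TB BB"
    using \<open>x \<in> AA\<close> \<open>y \<in> BB\<close> by auto
  then show ?case using Cons.IH[of qs'] Cons.prems
    by (auto simp: qs pa qa)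
qed

definition hdnil :: "('x list \<times> 'x) list \<Rightarrow> 'x list \<Rightarrow> bool" where
  "hdnil ps u = (case ps of [] \<Rightarrow> u = [] | (uk, x) # _ \<Rightarrow> uk = [])"

lemma sw_exists:
  "w \<in> lists (vl TA AA TB BB) \<Longrightarrow> okp b w \<Longrightarrow>
   \<exists>ps u qs v. length ps = length qs \<and> (\<forall>(uk, x) \<in> set ps. set uk \<subseteq> TA \<and> x \<in> AA) \<and> set u \<subseteq> TA
      \<and> (\<forall>(vk, y) \<in> set qs. set vk \<subseteq> TB \<and> y \<in> BB) \<and> set v \<subseteq> TB
      \<and> w = segre_word ps u qs v \<and> (b \<longrightarrow> hdnil ps u)"
proof (induction w arbitrary: b)
  case Nil
  show ?case by (rule exI[of _ "[]"], rule exI[of _ "[]"], rule exI[of _ "[]"], rule exI[of _ "[]"])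
    (simp add: hdnil_def)
next
  case (Cons c w)
  show ?case
  proof (cases c)
    case (TauA x)
    with Cons.prems have x: "x \<in> TA" and w: "w \<in> lists (vl TA AA TB BB)" "okp False w" and nb: "\<not> b" by auto
    from Cons.IH[OF w] obtain ps u qs v where H: "length ps = length qs" "\<forall>(uk, x) \<in> set ps. set uk \<subseteq> TA \<and> x \<in> AA" "set u \<subseteq> TA"
      "\<forall>(vk, y) \<in> set qs. set vk \<subseteq> TB \<and> y \<in> BB" "set v \<subseteq> TB" "w = segre_word ps u qs v" by blast
    show ?thesis
    proof (cases ps)
      case Nil
      with H have "qs = []" by simp
      then show ?thesis using H Nil x nb TauA
        by (intro exI[of _ "[]"] exI[of _ "x # u"] exI[of _ "[]"] exI[of _ v]) auto
    next
      case (Cons pa ps')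
      obtain uk a where pa: "pa = (uk, a)" by (cases pa)
      from H Cons obtain qa qs' where qs: "qs = qa # qs'" by (cases qs) auto
      obtain vk y where qa: "qa = (vk, y)" by (cases qa)
      show ?thesis using H Cons x nb TauA pa qs qa
        by (intro exI[of _ "(x # uk, a) # ps'"] exI[of _ u] exI[of _ qs] exI[of _ v]) auto
    qed
  next
    case (TauB y)
    with Cons.prems have y: "y \<in> TB" and w: "w \<in> lists (vl TA AA TB BB)" "okp True w" by auto
    from Cons.IH[OF w] obtain ps u qs v where H: "length ps = length qs" "\<forall>(uk, x) \<in> set ps. set uk \<subseteq> TA \<and> x \<in> AA" "set u \<subseteq> TA"
      "\<forall>(vk, y) \<in> set qs. set vk \<subseteq> TB \<and> y \<in> BB" "set v \<subseteq> TB" "w = segre_word ps u qs v" "hdnil ps u" by blast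
    show ?thesis
    proof (cases ps)
      case Nil
      with H have "qs = []" "u = []" by (auto simp: hdnil_def)
      then show ?thesis using H Nil y TauB
        by (intro exI[of _ "[]"] exI[of _ "[]"] exI[of _ "[]"] exI[of _ "y # v"]) (auto simp: hdnil_def)
    next
      case (Cons pa ps')
      obtain uk a where pa: "pa = (uk, a)" by (cases pa)
      with H Cons have uk: "uk = []" by (simp add: hdnil_def)
      from H Cons obtain qa qs' where qs: "qs = qa # qs'" by (cases qs) auto
      obtain vk b' where qa: "qa = (vk, b')" by (cases qa)
      show ?thesis using H Cons y TauB pa qs qa uk
        by (intro exI[of _ ps] exI[of _ u] exI[of _ "(y # vk, b') # qs'"] exI[of _ v]) (auto simp: hdnil_def)
    qed
  next
    case (Gamma x y)
    with Cons.prems have xy: "x \<in> AA" "y \<in> BB" and w: "w \<in> lists (vl TA AA TB BB)" "okp False w" by auto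
    from Cons.IH[OF w] obtain ps u qs v where H: "length ps = length qs" "\<forall>(uk, x) \<in> set ps. set uk \<subseteq> TA \<and> x \<in> AA" "set u \<subseteq> TA"
      "\<forall>(vk, y) \<in> set qs. set vk \<subseteq> TB \<and> y \<in> BB" "set v \<subseteq> TB" "w = segre_word ps u qs v" by blast
    show ?thesis using H xy Gamma
      by (intro exI[of _ "([], x) # ps"] exI[of _ u] exI[of _ "([], y) # qs"] exI[of _ v]) (auto simp: hdnil_def)
  qed
qed

lemma segre_char:
  "segre_product TA AA LA TB BB LB =
   {w. w \<in> lists (vl TA AA TB BB) \<and> okp False w \<and> pA w \<in> LA \<and> pB w \<in> LB}" (is "?S = ?R")
proof
  show "?S \<subseteq> ?R"
  proof
    fix w assume "w \<in> ?S"
    then obtain ps u qs v where H: "length ps = length qs" "\<forall>(uk, x) \<in> set ps. set uk \<subseteq> TA \<and> x \<in> AA" "set u \<subseteq> TA"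
      "\<forall>(vk, y) \<in> set qs. set vk \<subseteq> TB \<and> y \<in> BB" "set v \<subseteq> TB" "w = segre_word ps u qs v"
      "weave ps u \<in> LA" "weave qs v \<in> LB"
      unfolding segre_product_def by blast
    then show "w \<in> ?R" using sw_props[OF H(1)] sw_lists[OF H(1-5)] by simp
  qed
next
  show "?R \<subseteq> ?S"
  proof
    fix w assume "w \<in> ?R"
    then have w: "w \<in> lists (vl TA AA TB BB)" "okp False w" "pA w \<in> LA" "pB w \<in> LB" by auto
    from sw_exists[OF w(1,2)] obtain ps u qs v where H: "length ps = length qs" "\<forall>(uk, x) \<in> set ps. set uk \<subseteq> TA \<and> x \<in> AA" "set u \<subseteq> TA"
      "\<forall>(vk, y) \<in> set qs. set vk \<subseteq> TB \<and> y \<in> BB" "set v \<subseteq> TB" "w = segre_word ps u qs v" by blast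
    then show "w \<in> ?S" using sw_props[OF H(1)] w unfolding segre_product_def by auto
  qed
qed


lemma dq_segre:
  "dq w {w. w \<in> lists Sg \<and> okp False w \<and> pA w \<in> LA \<and> pB w \<in> LB} =
   (if w \<in> lists Sg \<and> okp False w then
      {v. v \<in> lists Sg \<and> okp (phs False w) v \<and> pA v \<in> dq (pA w) LA \<and> pB v \<in> dq (pB w) LB}
    else {})"
  by (auto simp: dq_def okp_append)

theorem theorem3p3:
  fixes TA AA :: "'x set" and TB BB :: "'y set"
    and LA :: "'x list set" and LB :: "'y list set"
  assumes "finite TA" and "finite AA" and "TA \<inter> AA = {}"
    and "finite TB" and "finite BB" and "TB \<inter> BB = {}"
    and "LA \<subseteq> lists (TA \<union> AA)" and "LB \<subseteq> lists (TB \<union> BB)"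
    and "regular LA" and "regular LB"
  shows "regular (segre_product TA AA LA TB BB LB)"
proof -
  let ?S = "vl TA AA TB BB"
  let ?R = "{w. w \<in> lists ?S \<and> okp False w \<and> pA w \<in> LA \<and> pB w \<in> LB}"
  let ?G = "\<lambda>(X, Y, b). {v. v \<in> lists ?S \<and> okp b v \<and> pA v \<in> X \<and> pB v \<in> Y}"
  have fS: "finite ?S" using assms by (intro finite_vl) auto
  have fA: "finite (range (\<lambda>w. dq w LA))" using assms(9) by (rule regular_fin_dq)
  have fB: "finite (range (\<lambda>w. dq w LB))" using assms(10) by (rule regular_fin_dq)
  have "range (\<lambda>w. dq w ?R) \<subseteq> insert {} (?G ` (range (\<lambda>w. dq w LA) \<times> range (\<lambda>w. dq w LB) \<times> UNIV))"
  proof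
    fix Z assume "Z \<in> range (\<lambda>w. dq w ?R)"
    then obtain w where Z: "Z = dq w ?R" by auto
    show "Z \<in> insert {} (?G ` (range (\<lambda>w. dq w LA) \<times> range (\<lambda>w. dq w LB) \<times> UNIV))"
    proof (cases "w \<in> lists ?S \<and> okp False w")
      case True
      then have "Z = ?G (dq (pA w) LA, dq (pB w) LB, phs False w)"
        unfolding Z dq_segre if_P[OF True] by simp
      then show ?thesis by blast
    next
      case False
      have "Z = {}" unfolding Z dq_segre if_not_P[OF False] by (rule refl)
      then show ?thesis by simp
    qed
  qed
  then have "finite (range (\<lambda>w. dq w ?R))"
    by (rule finite_subset) (use fA fB in auto)
  moreover have "?R \<subseteq> lists ?S" by auto
  ultimately have "regular ?R" using fS by (intro fin_dq_regular) auto
  then show ?thesis unfolding segre_char .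
qed

end
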